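(* If a dual-convex $m\times n$ net in $I^3$ is infinitesimally flexible in $I^3$, then it has a nontrivial infinitesimal isotropic isometric deformation consisting of isotropic vectors (vectors parallel to the $z$-axis).
   Context: $I^3$ is $\mathbb{R}^3$ with coordinates $(x,y,z)$; isotropic = parallel to the $z$-axis; top view $\overline P$ of $P=(x,y,z)$ is $(x,y)$. Metric duality: point $P=(P^1,P^2,P^3)\leftrightarrow$ plane $P^*\colon z=P^1x+P^2y-P^3$. Infinitesimal isotropic congruence: vector field $V(\mathbf x)=a\mathbf x+\mathbf b$, $\mathbf b\in\mathbb R^3$, $a=\begin{pmatrix}0&-\phi&0\\ \phi&0&0\\ c_1&c_2&0\end{pmatrix}$. An $m\times n$ net: points $F_{ij}$, $0\le i\le m,0\le j\le n$, with $F_{ij},F_{i+1,j},F_{i+1,j+1},F_{i,j+1}$ consecutive vertices of a convex planar quadrilateral (face $p_{ij}$) for all $0\le i<m,0\le j<n$. Boundary vertices: $i\in\{0,m\}$ or $j\in\{0,n\}$; consecutive faces around non-boundary $F_{ij}$: $p_{i-1,j-1},p_{i,j-1},p_{ij},p_{i-1,j}$. Convex 4-hedral angle with vertex $O$: union of rays from $O$ meeting a convex quadrilateral in a plane not through $O$; flat angles: rays through one side; admissible: isotropic line through $O$ meets its interior. Dual-convex: $m,n\ge2$ and at each non-boundary vertex the four consecutive face planes are planes of four consecutive flat angles of an admissible convex 4-hedral angle. Curvature at non-boundary vertex with consecutive faces $p_1..p_4$: $\Omega=\frac12\sum_{k=1}^4\det(\overline{p_k^*},\overline{p_{k+1}^*})$,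 $p_5=p_1$. An infinitesimal isotropic isometric deformation of a dual-convex net $F_{ij}$ is a collection $V_{ij}\in\mathbb R^3$ such that (face condition) for each face $p_{kl}$ there is an infinitesimal isotropic congruence $V$ with $V_{ij}=V(F_{ij})$ at its four vertices, and (vertex condition) $\frac{d}{dt}\Omega(F_{ij}+tV_{ij})|_{t=0}=0$ for each non-boundary vertex. It is trivial if one infinitesimal isotropic congruence $V$ satisfies $V_{ij}=V(F_{ij})$ for all $i,j$. The net is infinitesimally flexible in $I^3$ if it has a nontrivial one. *)

theory Defs
  imports "HOL-Analysis.Analysis"
begin

type_synonym pt = "real ^ 3"

text \<open>Points of I^3 are vectors in real^3 with components x = P$1, y = P$2, z = P$3.
  The isotropic direction is the z-axis.\<close>

definition e3 :: pt where
  "e3 = vector [0, 0, 1]"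

definition inf_iso_congruence :: "(pt \<Rightarrow> pt) \<Rightarrow> bool" where
  "inf_iso_congruence V \<longleftrightarrow>
     (\<exists>\<phi> c1 c2 (b::pt). \<forall>x.
        V x = vector [- \<phi> * x$2, \<phi> * x$1, c1 * x$1 + c2 * x$2] + b)"

definition convex_quad :: "pt \<Rightarrow> pt \<Rightarrow> pt \<Rightarrow> pt \<Rightarrow> bool" where
  "convex_quad A B C D \<longleftrightarrow>
     \<not> collinear {A, B, C, D} \<and> open_segment A C \<inter> open_segment B D \<noteq> {}"

text \<open>An m x n net; only the indices 0..m, 0..n matter.\<close>
definition is_net :: "nat \<Rightarrow> nat \<Rightarrow> (nat \<Rightarrow> nat \<Rightarrow> pt) \<Rightarrow> bool" where
  "is_net m n F \<longleftrightarrow>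
     (\<forall>i<m. \<forall>j<n. convex_quad (F i j) (F (Suc i) j) (F (Suc i) (Suc j)) (F i (Suc j)))"

definition face_vertices :: "(nat \<Rightarrow> nat \<Rightarrow> pt) \<Rightarrow> nat \<Rightarrow> nat \<Rightarrow> pt set" where
  "face_vertices F i j = {F i j, F (Suc i) j, F (Suc i) (Suc j), F i (Suc j)}"

definition face_plane :: "(nat \<Rightarrow> nat \<Rightarrow> pt) \<Rightarrow> nat \<Rightarrow> nat \<Rightarrow> pt set" where
  "face_plane F i j = affine hull (face_vertices F i j)"

definition hedral_angle :: "pt \<Rightarrow> pt \<Rightarrow> pt \<Rightarrow> pt \<Rightarrow> pt \<Rightarrow> pt set" where
  "hedral_angle Ov A B C D =
     {Ov + t *\<^sub>R (x - Ov) | t x. t \<ge> 0 \<and> x \<in> convex hull {A, B, C, D}}"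

definition admissible_convex_4hedral :: "pt \<Rightarrow> pt \<Rightarrow> pt \<Rightarrow> pt \<Rightarrow> pt \<Rightarrow> bool" where
  "admissible_convex_4hedral Ov A B C D \<longleftrightarrow>
     convex_quad A B C D \<and> Ov \<notin> affine hull {A, B, C, D} \<and>
     (\<exists>s. Ov + s *\<^sub>R e3 \<in> interior (hedral_angle Ov A B C D))"

text \<open>Arbitrary starting side and orientation are covered by relabelling A,B,C,D.\<close>
definition dual_convex :: "nat \<Rightarrow> nat \<Rightarrow> (nat \<Rightarrow> nat \<Rightarrow> pt) \<Rightarrow> bool" where
  "dual_convex m n F \<longleftrightarrow> 2 \<le> m \<and> 2 \<le> n \<and> is_net m n F \<and>
     (\<forall>i j. 0 < i \<and> i < m \<and> 0 < j \<and> j < n \<longrightarrow>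
        (\<exists>A B C D. admissible_convex_4hedral (F i j) A B C D \<and>
           face_plane F (i - 1) (j - 1) = affine hull {F i j, A, B} \<and>
           face_plane F i (j - 1) = affine hull {F i j, B, C} \<and>
           face_plane F i j = affine hull {F i j, C, D} \<and>
           face_plane F (i - 1) j = affine hull {F i j, D, A}))"

text \<open>Top view of the dual point p^* of the (non-isotropic) face plane z = a x + b y + c
  of p_ij: p^* = (a, b, -c), so its top view is (a, b).\<close>
definition face_dual_top :: "(nat \<Rightarrow> nat \<Rightarrow> pt) \<Rightarrow> nat \<Rightarrow> nat \<Rightarrow> real \<times> real" where
  "face_dual_top F i j =
     (THE s. \<exists>c. \<forall>P \<in> face_vertices F i j. P$3 = fst s * P$1 + snd s * P$2 + c)"

definition det2 :: "real \<times> real \<Rightarrow> real \<times> real \<Rightarrow> real" where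
  "det2 u v = fst u * snd v - snd u * fst v"

definition curvature :: "(nat \<Rightarrow> nat \<Rightarrow> pt) \<Rightarrow> nat \<Rightarrow> nat \<Rightarrow> real" where
  "curvature F i j =
     (let p1 = face_dual_top F (i - 1) (j - 1); p2 = face_dual_top F i (j - 1);
          p3 = face_dual_top F i j; p4 = face_dual_top F (i - 1) j
      in (det2 p1 p2 + det2 p2 p3 + det2 p3 p4 + det2 p4 p1) / 2)"

definition inf_iso_isometric_deformation ::
  "nat \<Rightarrow> nat \<Rightarrow> (nat \<Rightarrow> nat \<Rightarrow> pt) \<Rightarrow> (nat \<Rightarrow> nat \<Rightarrow> pt) \<Rightarrow> bool" where
  "inf_iso_isometric_deformation m n F V \<longleftrightarrow>
     (\<forall>k<m. \<forall>l<n. \<exists>W. inf_iso_congruence W \<and>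
        V k l = W (F k l) \<and> V (Suc k) l = W (F (Suc k) l) \<and>
        V (Suc k) (Suc l) = W (F (Suc k) (Suc l)) \<and> V k (Suc l) = W (F k (Suc l))) \<and>
     (\<forall>i j. 0 < i \<and> i < m \<and> 0 < j \<and> j < n \<longrightarrow>
        ((\<lambda>t. curvature (\<lambda>k l. F k l + t *\<^sub>R V k l) i j) has_real_derivative 0) (at 0))"

definition trivial_deformation ::
  "nat \<Rightarrow> nat \<Rightarrow> (nat \<Rightarrow> nat \<Rightarrow> pt) \<Rightarrow> (nat \<Rightarrow> nat \<Rightarrow> pt) \<Rightarrow> bool" where
  "trivial_deformation m n F V \<longleftrightarrow>
     (\<exists>W. inf_iso_congruence W \<and> (\<forall>i\<le>m. \<forall>j\<le>n. V i j = W (F i j)))"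

definition inf_flexible :: "nat \<Rightarrow> nat \<Rightarrow> (nat \<Rightarrow> nat \<Rightarrow> pt) \<Rightarrow> bool" where
  "inf_flexible m n F \<longleftrightarrow>
     (\<exists>V. inf_iso_isometric_deformation m n F V \<and> \<not> trivial_deformation m n F V)"

definition isotropic_vec :: "pt \<Rightarrow> bool" where
  "isotropic_vec v \<longleftrightarrow> v$1 = 0 \<and> v$2 = 0"

end

theory Submission
  imports Defs
begin


definition NV :: "pt set \<Rightarrow> bool" where
  "NV S \<longleftrightarrow> \<not> (\<exists>\<alpha> \<beta> \<gamma>. (\<alpha> \<noteq> 0 \<or> \<beta> \<noteq> 0) \<and> (\<forall>P\<in>S. \<alpha> * P$1 + \<beta> * P$2 = \<gamma>))"

definition ppred :: "pt set \<Rightarrow> real \<times> real \<Rightarrow> bool" where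
  "ppred S s \<longleftrightarrow> (\<exists>c. \<forall>P\<in>S. P$3 = fst s * P$1 + snd s * P$2 + c)"

lemma fdt_eq: "face_dual_top F i j = The (ppred (face_vertices F i j))"
  unfolding face_dual_top_def ppred_def by simp

lemma cross:
  assumes "convex_quad A B C D"
  obtains u v where "0 < u" "u < 1" "0 < v" "v < 1"
    "\<And>k. (1 - u) * A$k + u * C$k = (1 - v) * B$k + v * D$k"
proof -
  from assms obtain X where "X \<in> open_segment A C" "X \<in> open_segment B D"
    unfolding convex_quad_def by blast
  then obtain u v where uv: "0 < u" "u < 1" "X = (1 - u) *\<^sub>R A + u *\<^sub>R C"
     "0 < v" "v < 1" "X = (1 - v) *\<^sub>R B + v *\<^sub>R D"
    unfolding in_segment by blast
  have "\<And>k. (1 - u) * A$k + u * C$k = (1 - v) * B$k + v * D$k"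
  proof -
    fix k
    have "X$k = (1 - u) * A$k + u * C$k" using uv(3) by simp
    moreover have "X$k = (1 - v) * B$k + v * D$k" using uv(6) by simp
    ultimately show "(1 - u) * A$k + u * C$k = (1 - v) * B$k + v * D$k" by simp
  qed
  then show ?thesis using that uv by blast
qed

lemma quad_rot: "convex_quad A B C D \<Longrightarrow> convex_quad B C D A"
  unfolding convex_quad_def
  by (metis insert_commute open_segment_commute Int_commute)

lemma NV_rot: "NV {A,B,C,D} \<Longrightarrow> NV {B,C,D,A}"
  by (metis insert_commute)

lemma quad_adjacent:
  assumes "convex_quad A B C D" "A$1 = B$1" "A$2 = B$2"
  shows "\<not> NV {A,B,C,D}"
proof -
  obtain u v where uv: "0 < u" "u < 1" "0 < v" "v < 1"
    "\<And>k. (1 - u) * A$k + u * C$k = (1 - v) * B$k + v * D$k"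
    using cross[OF assms(1)] by blast
  have e1: "u * (C$1 - A$1) = v * (D$1 - A$1)" using uv(5)[of 1] assms(2) by (simp add: algebra_simps)
  have e2: "u * (C$2 - A$2) = v * (D$2 - A$2)" using uv(5)[of 2] assms(3) by (simp add: algebra_simps)
  show ?thesis
  proof (cases "C$1 = A$1 \<and> C$2 = A$2")
    case True
    then have "D$1 = A$1" "D$2 = A$2" using e1 e2 uv(3) by auto
    then have "(1::real) \<noteq> 0 \<and> (\<forall>P\<in>{A,B,C,D}. 1 * P$1 + 0 * P$2 = A$1)" using True assms by auto
    then show ?thesis unfolding NV_def by blast
  next
    case False
    define \<alpha> where "\<alpha> = -(C$2 - A$2)"
    define \<beta> where "\<beta> = C$1 - A$1"
    have "v * (\<alpha> * (D$1 - A$1) + \<beta> * (D$2 - A$2)) = \<alpha> * (v * (D$1 - A$1)) + \<beta> * (v * (D$2 - A$2))"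
      by (simp add: algebra_simps)
    also have "\<dots> = \<alpha> * (u * (C$1 - A$1)) + \<beta> * (u * (C$2 - A$2))"
      by (simp only: e1 e2)
    also have "\<dots> = 0" unfolding \<alpha>_def \<beta>_def by (simp add: algebra_simps)
    finally have "\<alpha> * (D$1 - A$1) + \<beta> * (D$2 - A$2) = 0" using uv(3) by simp
    then have d: "\<alpha> * D$1 + \<beta> * D$2 = \<alpha> * A$1 + \<beta> * A$2" by (simp add: algebra_simps)
    have c: "\<alpha> * C$1 + \<beta> * C$2 = \<alpha> * A$1 + \<beta> * A$2" unfolding \<alpha>_def \<beta>_def by (simp add: algebra_simps)
    have nz: "\<alpha> \<noteq> 0 \<or> \<beta> \<noteq> 0" using False unfolding \<alpha>_def \<beta>_def by auto
    have "(\<alpha> \<noteq> 0 \<or> \<beta> \<noteq> 0) \<and> (\<forall>P\<in>{A,B,C,D}. \<alpha> * P$1 + \<beta> * P$2 = \<alpha> * A$1 + \<beta> * A$2)"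
      using nz c d assms(2,3) by auto
    then show ?thesis unfolding NV_def by blast
  qed
qed


lemma quad_plane:
  assumes q: "convex_quad A B C D" and nv: "NV {A,B,C,D}"
  shows "\<exists>s. ppred {A,B,C,D} s"
proof -
  obtain u v where uv: "0 < u" "u < 1" "0 < v" "v < 1"
    "\<And>k. (1 - u) * A$k + u * C$k = (1 - v) * B$k + v * D$k"
    using cross[OF q] by blast
  have dk: "\<And>k. v * (D$k - A$k) = u * (C$k - A$k) - (1 - v) * (B$k - A$k)"
    using uv(5) by (simp add: algebra_simps)
  define d1 where "d1 = B$1 - A$1"
  define d2 where "d2 = B$2 - A$2"
  define f1 where "f1 = C$1 - A$1"
  define f2 where "f2 = C$2 - A$2"
  define det where "det = d1 * f2 - d2 * f1"
  have orth: False if "\<alpha> \<noteq> 0 \<or> \<beta> \<noteq> 0" "\<alpha> * d1 + \<beta> * d2 = 0" "\<alpha> * f1 + \<beta> * f2 = 0" for \<alpha> \<beta>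
  proof -
    have "v * (\<alpha> * (D$1 - A$1) + \<beta> * (D$2 - A$2)) = \<alpha> * (v * (D$1 - A$1)) + \<beta> * (v * (D$2 - A$2))"
      by (simp add: algebra_simps)
    also have "\<dots> = u * (\<alpha> * f1 + \<beta> * f2) - (1 - v) * (\<alpha> * d1 + \<beta> * d2)"
      unfolding dk f1_def f2_def d1_def d2_def by (simp add: algebra_simps)
    also have "\<dots> = 0" using that by simp
    finally have "\<alpha> * (D$1 - A$1) + \<beta> * (D$2 - A$2) = 0" using uv(3) by simp
    then have "\<forall>P\<in>{A,B,C,D}. \<alpha> * P$1 + \<beta> * P$2 = \<alpha> * A$1 + \<beta> * A$2"
      using that(2,3) unfolding f1_def f2_def d1_def d2_def by (auto simp: algebra_simps)
    then show False using nv that(1) unfolding NV_def by blast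
  qed
  have detnz: "det \<noteq> 0"
  proof
    assume det0: "det = 0"
    show False
    proof (cases "d1 = 0 \<and> d2 = 0")
      case False
      then show False using orth[of "-d2" d1] det0 unfolding det_def by (auto simp: algebra_simps)
    next
      case dz: True
      show False
      proof (cases "f1 = 0 \<and> f2 = 0")
        case True
        then show False using orth[of 1 0] dz by auto
      next
        case False
        then show False using orth[of "-f2" f1] dz by (auto simp: algebra_simps)
      qed
    qed
  qed
  define e1 where "e1 = B$3 - A$3"
  define e2 where "e2 = C$3 - A$3"
  define s1 where "s1 = (e1 * f2 - e2 * d2) / det"
  define s2 where "s2 = (d1 * e2 - f1 * e1) / det"
  have s1d: "s1 * det = e1 * f2 - e2 * d2" unfolding s1_def using detnz by simp
  have s2d: "s2 * det = d1 * e2 - f1 * e1" unfolding s2_def using detnz by simp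
  have "(s1 * d1 + s2 * d2) * det = d1 * (s1 * det) + d2 * (s2 * det)" by (simp add: algebra_simps)
  also have "\<dots> = e1 * det" unfolding s1d s2d by (simp add: det_def algebra_simps)
  finally have h1: "s1 * d1 + s2 * d2 = e1" using mult_right_cancel[OF detnz] by blast
  have "(s1 * f1 + s2 * f2) * det = f1 * (s1 * det) + f2 * (s2 * det)" by (simp add: algebra_simps)
  also have "\<dots> = e2 * det" unfolding s1d s2d by (simp add: det_def algebra_simps)
  finally have h2: "s1 * f1 + s2 * f2 = e2" using mult_right_cancel[OF detnz] by blast
  define c where "c = A$3 - s1 * A$1 - s2 * A$2"
  have "v * (D$3 - (s1 * D$1 + s2 * D$2 + c)) = v * (D$3 - A$3) - s1 * (v * (D$1 - A$1)) - s2 * (v * (D$2 - A$2))"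
    unfolding c_def by (simp add: algebra_simps)
  also have "\<dots> = u * (e2 - (s1 * f1 + s2 * f2)) - (1 - v) * (e1 - (s1 * d1 + s2 * d2))"
    unfolding dk e1_def e2_def f1_def f2_def d1_def d2_def by (simp add: algebra_simps)
  also have "\<dots> = 0" using h1 h2 by simp
  finally have hD: "D$3 = s1 * D$1 + s2 * D$2 + c" using uv(3) by simp
  have hB: "B$3 = s1 * B$1 + s2 * B$2 + c" using h1 unfolding c_def e1_def d1_def d2_def by (simp add: algebra_simps)
  have hC: "C$3 = s1 * C$1 + s2 * C$2 + c" using h2 unfolding c_def e2_def f1_def f2_def by (simp add: algebra_simps)
  have hA: "A$3 = s1 * A$1 + s2 * A$2 + c" unfolding c_def by simp
  have "ppred {A,B,C,D} (s1, s2)" unfolding ppred_def using hA hB hC hD by auto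
  then show ?thesis by blast
qed


lemma cone_nonvert:
  assumes adm: "admissible_convex_4hedral Ov A B C D"
    and nz: "\<alpha> \<noteq> 0 \<or> \<beta> \<noteq> 0"
    and hO: "\<alpha> * Ov$1 + \<beta> * Ov$2 = \<gamma>" and hA: "\<alpha> * A$1 + \<beta> * A$2 = \<gamma>"
    and hB: "\<alpha> * B$1 + \<beta> * B$2 = \<gamma>"
  shows False
proof -
  define n :: pt where "n = vector [\<alpha>, \<beta>, 0]"
  have ip: "\<And>P. n \<bullet> P = \<alpha> * P$1 + \<beta> * P$2"
    unfolding n_def inner_vec_def sum_3 by simp
  have nnz: "n \<noteq> 0" using nz unfolding n_def by (auto simp: vec_eq_iff forall_3)
  have ne3: "n \<bullet> e3 = 0" unfolding ip e3_def by simp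
  have q: "convex_quad A B C D" using adm unfolding admissible_convex_4hedral_def by blast
  obtain s where s: "Ov + s *\<^sub>R e3 \<in> interior (hedral_angle Ov A B C D)"
    using adm unfolding admissible_convex_4hedral_def by blast
  have nOs: "n \<bullet> (Ov + s *\<^sub>R e3) = \<gamma>" using ne3 hO ip by (simp add: inner_add_right)
  obtain u v where uv: "0 < u" "u < 1" "0 < v" "v < 1"
    "\<And>k. (1 - u) * A$k + u * C$k = (1 - v) * B$k + v * D$k"
    using cross[OF q] by blast
  have "n \<bullet> ((1 - u) *\<^sub>R A + u *\<^sub>R C) = n \<bullet> ((1 - v) *\<^sub>R B + v *\<^sub>R D)"
  proof -
    have "(1 - u) *\<^sub>R A + u *\<^sub>R C = (1 - v) *\<^sub>R B + v *\<^sub>R D"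
      unfolding vec_eq_iff using uv(5) by simp
    then show ?thesis by simp
  qed
  then have "(1 - u) * \<gamma> + u * (n \<bullet> C) = (1 - v) * \<gamma> + v * (n \<bullet> D)"
    using hA hB ip by (simp add: inner_add_right)
  then have eq: "u * (n \<bullet> C - \<gamma>) = v * (n \<bullet> D - \<gamma>)" by (simp add: algebra_simps)
  have cone: "hedral_angle Ov A B C D \<subseteq> {x. \<sigma> * \<gamma> \<le> (\<sigma> *\<^sub>R n) \<bullet> x}"
    if sig: "\<sigma> * (n \<bullet> C) \<ge> \<sigma> * \<gamma>" "\<sigma> * (n \<bullet> D) \<ge> \<sigma> * \<gamma>" for \<sigma> :: real
  proof
    fix y assume "y \<in> hedral_angle Ov A B C D"
    then obtain t x where tx: "y = Ov + t *\<^sub>R (x - Ov)" "t \<ge> 0" "x \<in> convex hull {A, B, C, D}"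
      unfolding hedral_angle_def by blast
    have sub: "{A,B,C,D} \<subseteq> {x. \<sigma> * \<gamma> \<le> (\<sigma> *\<^sub>R n) \<bullet> x}"
      using sig hA hB ip by auto
    have "convex hull {A,B,C,D} \<subseteq> {x. \<sigma> * \<gamma> \<le> (\<sigma> *\<^sub>R n) \<bullet> x}"
      by (rule hull_minimal[OF sub]) (rule convex_halfspace_ge)
    with tx(3) have "\<sigma> * \<gamma> \<le> \<sigma> * (n \<bullet> x)" by auto
    then have "0 \<le> t * (\<sigma> * (n \<bullet> x) - \<sigma> * \<gamma>)" using tx(2) by simp
    moreover have "(\<sigma> *\<^sub>R n) \<bullet> y = \<sigma> * \<gamma> + t * (\<sigma> * (n \<bullet> x) - \<sigma> * \<gamma>)"
      unfolding tx(1) using hO ip by (simp add: inner_add_right inner_diff_right algebra_simps)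
    ultimately show "y \<in> {x. \<sigma> * \<gamma> \<le> (\<sigma> *\<^sub>R n) \<bullet> x}" by simp
  qed
  have sgn: "\<exists>\<sigma>::real. (\<sigma> = 1 \<or> \<sigma> = -1) \<and> \<sigma> * (n \<bullet> C) \<ge> \<sigma> * \<gamma> \<and> \<sigma> * (n \<bullet> D) \<ge> \<sigma> * \<gamma>"
  proof (cases "n \<bullet> C \<ge> \<gamma>")
    case True
    then have "u * (n \<bullet> C - \<gamma>) \<ge> 0" using uv by simp
    then have "v * (n \<bullet> D - \<gamma>) \<ge> 0" using eq by simp
    then have "n \<bullet> D \<ge> \<gamma>" using uv(3) by (simp add: zero_le_mult_iff)
    then show ?thesis using True by (intro exI[of _ 1]) simp
  next
    case False
    then have "u * (n \<bullet> C - \<gamma>) \<le> 0" using uv by (simp add: mult_nonneg_nonpos)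
    then have "v * (n \<bullet> D - \<gamma>) \<le> 0" using eq by simp
    then have "n \<bullet> D \<le> \<gamma>" using uv(3) by (simp add: mult_le_0_iff)
    then show ?thesis using False by (intro exI[of _ "-1"]) simp
  qed
  then obtain \<sigma> :: real where sg: "\<sigma> = 1 \<or> \<sigma> = -1" "\<sigma> * (n \<bullet> C) \<ge> \<sigma> * \<gamma>" "\<sigma> * (n \<bullet> D) \<ge> \<sigma> * \<gamma>"
    by blast
  have snz: "\<sigma> *\<^sub>R n \<noteq> 0" using sg(1) nnz by auto
  have "Ov + s *\<^sub>R e3 \<in> interior {x. \<sigma> * \<gamma> \<le> (\<sigma> *\<^sub>R n) \<bullet> x}"
    using s interior_mono[OF cone[OF sg(2,3)]] by blast
  then have "\<sigma> * \<gamma> < (\<sigma> *\<^sub>R n) \<bullet> (Ov + s *\<^sub>R e3)"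
    unfolding interior_halfspace_ge[OF snz] by simp
  then show False using nOs by simp
qed



lemma adm_rot: "admissible_convex_4hedral Ov A B C D \<Longrightarrow> admissible_convex_4hedral Ov B C D A"
proof -
  assume a: "admissible_convex_4hedral Ov A B C D"
  have s: "{B,C,D,A} = {A,B,C,D}" by auto
  have h: "hedral_angle Ov B C D A = hedral_angle Ov A B C D"
    unfolding hedral_angle_def s ..
  show ?thesis using a quad_rot unfolding admissible_convex_4hedral_def h s by blast
qed

lemma halfline_affine: "affine {P::pt. \<alpha> * P$1 + \<beta> * P$2 = \<gamma>}"
proof -
  have "{P::pt. \<alpha> * P$1 + \<beta> * P$2 = \<gamma>} = {x. vector [\<alpha>, \<beta>, 0] \<bullet> x = \<gamma>}"
    by (simp add: inner_vec_def sum_3)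
  then show ?thesis using affine_hyperplane by metis
qed

lemma nonvert_help:
  assumes "admissible_convex_4hedral Ov X Y Z W" "affine hull S = affine hull {Ov, X, Y}"
    "Ov \<in> S" "\<alpha> \<noteq> 0 \<or> \<beta> \<noteq> 0" "\<forall>P\<in>S. \<alpha> * P$1 + \<beta> * P$2 = \<gamma>"
  shows False
proof -
  let ?H = "{P::pt. \<alpha> * P$1 + \<beta> * P$2 = \<gamma>}"
  have "S \<subseteq> ?H" using assms(5) by auto
  then have "affine hull S \<subseteq> ?H" by (rule hull_minimal) (rule halfline_affine)
  moreover have "X \<in> affine hull {Ov, X, Y}" "Y \<in> affine hull {Ov, X, Y}" by (auto intro: hull_inc)
  ultimately have "X \<in> ?H" "Y \<in> ?H" using assms(2) by auto
  then show False using cone_nonvert[OF assms(1) assms(4)] assms(3,5) by auto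
qed

lemma face_NV:
  assumes dc: "dual_convex m n F" and kl: "k < m" "l < n"
  shows "NV (face_vertices F k l)"
proof (rule ccontr)
  assume "\<not> NV (face_vertices F k l)"
  then obtain \<alpha> \<beta> \<gamma> where nz: "\<alpha> \<noteq> 0 \<or> \<beta> \<noteq> 0"
    and hall: "\<forall>P\<in>face_vertices F k l. \<alpha> * P$1 + \<beta> * P$2 = \<gamma>"
    unfolding NV_def by blast
  have m2: "2 \<le> m" "2 \<le> n" and int: "\<And>i j. 0 < i \<Longrightarrow> i < m \<Longrightarrow> 0 < j \<Longrightarrow> j < n \<Longrightarrow>
        (\<exists>A B C D. admissible_convex_4hedral (F i j) A B C D \<and>
           face_plane F (i - 1) (j - 1) = affine hull {F i j, A, B} \<and>
           face_plane F i (j - 1) = affine hull {F i j, B, C} \<and>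
           face_plane F i j = affine hull {F i j, C, D} \<and>
           face_plane F (i - 1) j = affine hull {F i j, D, A})"
    using dc unfolding dual_convex_def by blast+
  define i where "i = (if Suc k < m then Suc k else k)"
  define j where "j = (if Suc l < n then Suc l else l)"
  have ij: "0 < i" "i < m" "0 < j" "j < n" using kl m2 unfolding i_def j_def by auto
  obtain A B C D where adm: "admissible_convex_4hedral (F i j) A B C D"
    and p1: "face_plane F (i - 1) (j - 1) = affine hull {F i j, A, B}"
    and p2: "face_plane F i (j - 1) = affine hull {F i j, B, C}"
    and p3: "face_plane F i j = affine hull {F i j, C, D}"
    and p4: "face_plane F (i - 1) j = affine hull {F i j, D, A}"
    using int[OF ij] by blast
  have adm2: "admissible_convex_4hedral (F i j) B C D A" using adm_rot[OF adm] .
  have adm3: "admissible_convex_4hedral (F i j) C D A B" using adm_rot[OF adm2] .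
  have adm4: "admissible_convex_4hedral (F i j) D A B C" using adm_rot[OF adm3] .
  show False
  proof (cases "Suc k < m")
    case ck: True
    show False
    proof (cases "Suc l < n")
      case True
      then have "i = Suc k" "j = Suc l" using ck unfolding i_def j_def by auto
      then show False using nonvert_help[OF adm _ _ nz hall] p1 unfolding face_plane_def
        by (simp add: face_vertices_def)
    next
      case False
      then have "i = Suc k" "j = l" using ck unfolding i_def j_def by auto
      then show False using nonvert_help[OF adm4 _ _ nz hall] p4 unfolding face_plane_def
        by (simp add: face_vertices_def)
    qed
  next
    case ck: False
    show False
    proof (cases "Suc l < n")
      case True
      then have "i = k" "j = Suc l" using ck unfolding i_def j_def by auto
      then show False using nonvert_help[OF adm2 _ _ nz hall] p2 unfolding face_plane_def
        by (simp add: face_vertices_def)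
    next
      case False
      then have "i = k" "j = l" using ck unfolding i_def j_def by auto
      then show False using nonvert_help[OF adm3 _ _ nz hall] p3 unfolding face_plane_def
        by (simp add: face_vertices_def)
    qed
  qed
qed

lemma face_quad:
  assumes dc: "dual_convex m n F" and kl: "k < m" "l < n"
  shows "convex_quad (F k l) (F (Suc k) l) (F (Suc k) (Suc l)) (F k (Suc l))"
  using assms unfolding dual_convex_def is_net_def by blast

lemma face_plane_ex:
  assumes dc: "dual_convex m n F" and kl: "k < m" "l < n"
  shows "\<exists>s. ppred (face_vertices F k l) s"
  using quad_plane[OF face_quad[OF assms]] face_NV[OF assms] unfolding face_vertices_def by blast



definition mot :: "real \<Rightarrow> real \<Rightarrow> real \<Rightarrow> pt \<Rightarrow> pt \<Rightarrow> bool" where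
  "mot \<phi> b1 b2 P Q \<longleftrightarrow> Q$1 = - \<phi> * P$2 + b1 \<and> Q$2 = \<phi> * P$1 + b2"

definition fok :: "(nat \<Rightarrow> nat \<Rightarrow> pt) \<Rightarrow> (nat \<Rightarrow> nat \<Rightarrow> pt) \<Rightarrow> nat \<Rightarrow> nat \<Rightarrow> real \<Rightarrow> real \<Rightarrow> real \<Rightarrow> bool" where
  "fok F V k l \<phi> b1 b2 \<longleftrightarrow> mot \<phi> b1 b2 (F k l) (V k l) \<and> mot \<phi> b1 b2 (F (Suc k) l) (V (Suc k) l) \<and>
     mot \<phi> b1 b2 (F (Suc k) (Suc l)) (V (Suc k) (Suc l)) \<and> mot \<phi> b1 b2 (F k (Suc l)) (V k (Suc l))"

lemma cong_mot: "inf_iso_congruence W \<Longrightarrow> \<exists>\<phi> b1 b2. \<forall>x. mot \<phi> b1 b2 x (W x)"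
  unfolding inf_iso_congruence_def mot_def by force

lemma mot_unique:
  assumes "mot \<phi> b1 b2 P X" "mot \<phi>' b1' b2' P X" "mot \<phi> b1 b2 Q Y" "mot \<phi>' b1' b2' Q Y"
    "\<not> (P$1 = Q$1 \<and> P$2 = Q$2)"
  shows "\<phi> = \<phi>' \<and> b1 = b1' \<and> b2 = b2'"
proof -
  have a: "(\<phi> - \<phi>') * (P$2 - Q$2) = 0" "(\<phi> - \<phi>') * (P$1 - Q$1) = 0"
    using assms(1-4) unfolding mot_def by (auto simp: algebra_simps)
  have "\<phi> = \<phi>'" using a assms(5) by auto
  then show ?thesis using assms(1,2) unfolding mot_def by auto
qed

lemma edge_BC:
  assumes dc: "dual_convex m n F" and kl: "k < m" "l < n"
  shows "\<not> (F (Suc k) l $1 = F (Suc k) (Suc l) $1 \<and> F (Suc k) l $2 = F (Suc k) (Suc l) $2)"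
  using quad_adjacent[OF quad_rot[OF face_quad[OF assms]]] NV_rot face_NV[OF assms]
  unfolding face_vertices_def by blast

lemma edge_CD:
  assumes dc: "dual_convex m n F" and kl: "k < m" "l < n"
  shows "\<not> (F (Suc k) (Suc l) $1 = F k (Suc l) $1 \<and> F (Suc k) (Suc l) $2 = F k (Suc l) $2)"
  using quad_adjacent[OF quad_rot[OF quad_rot[OF face_quad[OF assms]]]] NV_rot face_NV[OF assms]
  unfolding face_vertices_def by blast

lemma global_motion:
  assumes dc: "dual_convex m n F" and def: "inf_iso_isometric_deformation m n F V"
  shows "\<exists>\<phi> b1 b2. \<forall>i\<le>m. \<forall>j\<le>n. mot \<phi> b1 b2 (F i j) (V i j)"
proof -
  have m2: "2 \<le> m" "2 \<le> n" using dc unfolding dual_convex_def by auto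
  have ex: "\<exists>\<phi> b1 b2. fok F V k l \<phi> b1 b2" if kl: "k < m" "l < n" for k l
  proof -
    have fc: "\<forall>k<m. \<forall>l<n. \<exists>W. inf_iso_congruence W \<and>
        V k l = W (F k l) \<and> V (Suc k) l = W (F (Suc k) l) \<and>
        V (Suc k) (Suc l) = W (F (Suc k) (Suc l)) \<and> V k (Suc l) = W (F k (Suc l))"
      using def unfolding inf_iso_isometric_deformation_def by (rule conjunct1)
    obtain W where W: "inf_iso_congruence W" "V k l = W (F k l)" "V (Suc k) l = W (F (Suc k) l)"
        "V (Suc k) (Suc l) = W (F (Suc k) (Suc l))" "V k (Suc l) = W (F k (Suc l))"
      using fc kl by blast
    obtain \<phi> b1 b2 where "\<forall>x. mot \<phi> b1 b2 x (W x)" using cong_mot[OF W(1)] by blast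
    then have "fok F V k l \<phi> b1 b2" unfolding fok_def W(2-5) by blast
    then show ?thesis by blast
  qed
  obtain \<phi> b1 b2 where f0: "fok F V 0 0 \<phi> b1 b2" using ex[of 0 0] m2 by auto
  have row0: "\<forall>l. l < n \<longrightarrow> fok F V 0 l \<phi> b1 b2"
  proof (intro allI)
    fix l show "l < n \<longrightarrow> fok F V 0 l \<phi> b1 b2"
    proof (induction l)
      case 0 then show ?case using f0 by simp
    next
      case (Suc l)
      show ?case
      proof
        assume sl: "Suc l < n"
        then have prev: "fok F V 0 l \<phi> b1 b2" using Suc by simp
        obtain \<phi>' b1' b2' where f': "fok F V 0 (Suc l) \<phi>' b1' b2'" using ex[of 0 "Suc l"] sl m2 by auto
        have "\<phi> = \<phi>' \<and> b1 = b1' \<and> b2 = b2'"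
          apply (rule mot_unique[of _ _ _ "F 1 (Suc l)" "V 1 (Suc l)" _ _ _ "F 0 (Suc l)" "V 0 (Suc l)"])
          using prev f' edge_CD[OF dc, of 0 l] sl m2 unfolding fok_def by auto
        then show "fok F V 0 (Suc l) \<phi> b1 b2" using f' by simp
      qed
    qed
  qed
  have all: "\<forall>l<n. fok F V k l \<phi> b1 b2" if "k < m" for k
    using that
  proof (induction k)
    case 0 then show ?case using row0 by simp
  next
    case (Suc k)
    show ?case
    proof (intro allI impI)
      fix l assume l: "l < n"
      have prev: "fok F V k l \<phi> b1 b2" using Suc l by simp
      obtain \<phi>' b1' b2' where f': "fok F V (Suc k) l \<phi>' b1' b2'" using ex[of "Suc k" l] Suc.prems l by auto
      have "\<phi> = \<phi>' \<and> b1 = b1' \<and> b2 = b2'"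
        apply (rule mot_unique[of _ _ _ "F (Suc k) l" "V (Suc k) l" _ _ _ "F (Suc k) (Suc l)" "V (Suc k) (Suc l)"])
        using prev f' edge_BC[OF dc, of k l] Suc.prems l unfolding fok_def by auto
      then show "fok F V (Suc k) l \<phi> b1 b2" using f' by simp
    qed
  qed
  have "mot \<phi> b1 b2 (F i j) (V i j)" if ij: "i \<le> m" "j \<le> n" for i j
  proof -
    define k where "k = (if i < m then i else i - 1)"
    define l where "l = (if j < n then j else j - 1)"
    have kl: "k < m" "l < n" using ij m2 unfolding k_def l_def by auto
    have f: "fok F V k l \<phi> b1 b2" using all kl by blast
    have "i = k \<or> i = Suc k" "j = l \<or> j = Suc l" using ij m2 unfolding k_def l_def by auto
    then show ?thesis using f unfolding fok_def by auto
  qed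
  then show ?thesis by blast
qed



definition rel :: "real \<Rightarrow> real \<Rightarrow> real \<Rightarrow> real \<Rightarrow> pt \<Rightarrow> pt \<Rightarrow> bool" where
  "rel t \<phi> b1 b2 P P' \<longleftrightarrow> P$1 = P'$1 - t * \<phi> * P'$2 + t * b1 \<and> P$2 = P'$2 + t * \<phi> * P'$1 + t * b2 \<and> P$3 = P'$3"

definition Rm :: "real \<Rightarrow> real \<Rightarrow> real \<times> real \<Rightarrow> real \<times> real" where
  "Rm t \<phi> s = ((fst s - t * \<phi> * snd s) / (1 + (t * \<phi>)^2), (t * \<phi> * fst s + snd s) / (1 + (t * \<phi>)^2))"

lemma Dpos: "(0::real) < 1 + (t * \<phi>)^2"
  by (simp add: add_pos_nonneg)

lemma g1: fixes D :: real shows "D \<noteq> 0 \<Longrightarrow> p / D + a * (q / D) = (p + a * q) / D"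
  by (simp add: field_simps)
lemma g2: fixes D :: real shows "D \<noteq> 0 \<Longrightarrow> p / D - a * (q / D) = (p - a * q) / D"
  by (simp add: field_simps)
lemma g3: fixes D :: real shows "D \<noteq> 0 \<Longrightarrow> (p / D) * (q / D) - (r / D) * (w / D) = (p * q - r * w) / (D * D)"
  by (simp add: field_simps)
lemma t1: fixes a x y :: real shows "(x - a * y) / (1 + a^2) + a * ((a * x + y) / (1 + a^2)) = x"
proof -
  have D: "1 + a^2 \<noteq> 0" by (metis add_pos_nonneg zero_less_one zero_le_power2 less_irrefl)
  have "(x - a * y) + a * (a * x + y) = x * (1 + a^2)" by (simp add: algebra_simps power2_eq_square)
  then show ?thesis using D g1[OF D] by simp
qed
lemma t2: fixes a x y :: real shows "(a * x + y) / (1 + a^2) - a * ((x - a * y) / (1 + a^2)) = y"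
proof -
  have D: "1 + a^2 \<noteq> 0" by (metis add_pos_nonneg zero_less_one zero_le_power2 less_irrefl)
  have "(a * x + y) - a * (x - a * y) = y * (1 + a^2)" by (simp add: algebra_simps power2_eq_square)
  then show ?thesis using D g2[OF D] by simp
qed
lemma t3: fixes a x y u v :: real shows
  "((x - a * y) / (1 + a^2)) * ((a * u + v) / (1 + a^2)) - ((a * x + y) / (1 + a^2)) * ((u - a * v) / (1 + a^2))
   = (x * v - y * u) / (1 + a^2)"
proof -
  have D: "1 + a^2 \<noteq> 0" by (metis add_pos_nonneg zero_less_one zero_le_power2 less_irrefl)
  have "(x - a * y) * (a * u + v) - (a * x + y) * (u - a * v) = (x * v - y * u) * (1 + a^2)"
    by (simp add: algebra_simps power2_eq_square)
  then show ?thesis using D g3[OF D] by simp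
qed
lemma t4: fixes a x y :: real shows "((x + a * y) - a * (y - a * x)) / (1 + a^2) = x"
proof -
  have D: "1 + a^2 \<noteq> 0" by (metis add_pos_nonneg zero_less_one zero_le_power2 less_irrefl)
  have "(x + a * y) - a * (y - a * x) = x * (1 + a^2)" by (simp add: algebra_simps power2_eq_square)
  then show ?thesis using D by simp
qed
lemma t5: fixes a x y :: real shows "(a * (x + a * y) + (y - a * x)) / (1 + a^2) = y"
proof -
  have D: "1 + a^2 \<noteq> 0" by (metis add_pos_nonneg zero_less_one zero_le_power2 less_irrefl)
  have "a * (x + a * y) + (y - a * x) = y * (1 + a^2)" by (simp add: algebra_simps power2_eq_square)
  then show ?thesis using D by simp
qed

lemma Rm1: "fst (Rm t \<phi> s) + t * \<phi> * snd (Rm t \<phi> s) = fst s"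
  unfolding Rm_def using t1[of "fst s" "t * \<phi>" "snd s"] by simp

lemma Rm2: "snd (Rm t \<phi> s) - t * \<phi> * fst (Rm t \<phi> s) = snd s"
  unfolding Rm_def using t2[of "t * \<phi>" "fst s" "snd s"] by simp

lemma Rm_inv: "Rm t \<phi> (fst s + t * \<phi> * snd s, snd s - t * \<phi> * fst s) = s"
  unfolding Rm_def using t4[of "fst s" "t * \<phi>" "snd s"] t5[of "t * \<phi>" "fst s" "snd s"]
  by (simp add: prod_eq_iff)

lemma det2_Rm: "det2 (Rm t \<phi> x) (Rm t \<phi> y) = det2 x y / (1 + (t * \<phi>)^2)"
  unfolding Rm_def det2_def using t3[of "fst x" "t * \<phi>" "snd x" "fst y" "snd y"] by simp

lemma ppred_unique:
  assumes "NV S" "ppred S a" "ppred S b" shows "a = b"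
proof (rule ccontr)
  assume ne: "a \<noteq> b"
  obtain ca cb where ca: "\<forall>P\<in>S. P$3 = fst a * P$1 + snd a * P$2 + ca"
    and cb: "\<forall>P\<in>S. P$3 = fst b * P$1 + snd b * P$2 + cb"
    using assms(2,3) unfolding ppred_def by blast
  have "\<forall>P\<in>S. (fst a - fst b) * P$1 + (snd a - snd b) * P$2 = cb - ca"
    using ca cb by (auto simp: algebra_simps)
  moreover have "fst a - fst b \<noteq> 0 \<or> snd a - snd b \<noteq> 0" using ne by (auto simp: prod_eq_iff)
  ultimately show False using assms(1) unfolding NV_def by blast
qed

lemma The_ppred: "NV S \<Longrightarrow> ppred S s \<Longrightarrow> The (ppred S) = s"
  using ppred_unique by (metis the_equality)

lemma dual_transform:
  assumes r1: "\<forall>P\<in>S. \<exists>P'\<in>S'. rel t \<phi> b1 b2 P P'"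
    and r2: "\<forall>P'\<in>S'. \<exists>P\<in>S. rel t \<phi> b1 b2 P P'"
    and nv: "NV S'" and pp: "ppred S' s'"
  shows "The (ppred S) = Rm t \<phi> (The (ppred S'))"
proof -
  have T': "The (ppred S') = s'" using The_ppred[OF nv pp] .
  obtain c where c: "\<forall>P'\<in>S'. P'$3 = fst s' * P'$1 + snd s' * P'$2 + c"
    using pp unfolding ppred_def by blast
  define R where "R = Rm t \<phi> s'"
  have ex: "ppred S R"
    unfolding ppred_def
  proof (rule exI[of _ "c - t * (fst R * b1 + snd R * b2)"], intro ballI)
    fix P assume "P \<in> S"
    then obtain P' where P': "P' \<in> S'" "rel t \<phi> b1 b2 P P'" using r1 by blast
    have "fst R * P$1 + snd R * P$2 = (fst R + t * \<phi> * snd R) * P'$1 + (snd R - t * \<phi> * fst R) * P'$2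
       + t * (fst R * b1 + snd R * b2)"
    proof -
      have e: "P$1 = P'$1 - t * \<phi> * P'$2 + t * b1" "P$2 = P'$2 + t * \<phi> * P'$1 + t * b2"
        using P'(2) unfolding rel_def by auto
      show ?thesis unfolding e by (simp add: algebra_simps)
    qed
    also have "\<dots> = fst s' * P'$1 + snd s' * P'$2 + t * (fst R * b1 + snd R * b2)"
      unfolding R_def Rm1 Rm2 ..
    finally show "P$3 = fst R * P$1 + snd R * P$2 + (c - t * (fst R * b1 + snd R * b2))"
      using c P' unfolding rel_def by auto
  qed
  have un: "s = R" if ps: "ppred S s" for s
  proof -
    obtain d where d: "\<forall>P\<in>S. P$3 = fst s * P$1 + snd s * P$2 + d"
      using ps unfolding ppred_def by blast
    have "ppred S' (fst s + t * \<phi> * snd s, snd s - t * \<phi> * fst s)"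
      unfolding ppred_def
    proof (rule exI[of _ "d + t * (fst s * b1 + snd s * b2)"], intro ballI)
      fix P' assume "P' \<in> S'"
      then obtain P where P: "P \<in> S" "rel t \<phi> b1 b2 P P'" using r2 by blast
      have "P'$3 = fst s * P$1 + snd s * P$2 + d" using d P unfolding rel_def by auto
      also have "\<dots> = (fst s + t * \<phi> * snd s) * P'$1 + (snd s - t * \<phi> * fst s) * P'$2
          + (d + t * (fst s * b1 + snd s * b2))"
      proof -
        have e: "P$1 = P'$1 - t * \<phi> * P'$2 + t * b1" "P$2 = P'$2 + t * \<phi> * P'$1 + t * b2"
          using P(2) unfolding rel_def by auto
        show ?thesis unfolding e by (simp add: algebra_simps)
      qed
      finally show "P'$3 = fst (fst s + t * \<phi> * snd s, snd s - t * \<phi> * fst s) * P'$1 +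
          snd (fst s + t * \<phi> * snd s, snd s - t * \<phi> * fst s) * P'$2 + (d + t * (fst s * b1 + snd s * b2))"
        by simp
    qed
    then have "(fst s + t * \<phi> * snd s, snd s - t * \<phi> * fst s) = s'"
      using ppred_unique[OF nv _ pp] by blast
    then show "s = R" unfolding R_def using Rm_inv[of t \<phi> s] by simp
  qed
  have "The (ppred S) = R" using ex un by (rule the_equality)
  then show ?thesis unfolding T' R_def .
qed

lemma NV_transfer:
  assumes nv: "NV S" and r: "\<forall>P\<in>S. \<exists>P'\<in>S'. P'$1 = P$1 \<and> P'$2 = P$2" shows "NV S'"
  unfolding NV_def
proof
  assume "\<exists>\<alpha> \<beta> \<gamma>. (\<alpha> \<noteq> 0 \<or> \<beta> \<noteq> 0) \<and> (\<forall>P\<in>S'. \<alpha> * P$1 + \<beta> * P$2 = \<gamma>)"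
  then obtain \<alpha> \<beta> \<gamma> where h: "\<alpha> \<noteq> 0 \<or> \<beta> \<noteq> 0" "\<forall>P\<in>S'. \<alpha> * P$1 + \<beta> * P$2 = \<gamma>"
    by blast
  have "\<forall>P\<in>S. \<alpha> * P$1 + \<beta> * P$2 = \<gamma>"
  proof
    fix P assume "P \<in> S"
    then obtain P' where "P' \<in> S'" "P'$1 = P$1" "P'$2 = P$2" using r by blast
    then show "\<alpha> * P$1 + \<beta> * P$2 = \<gamma>" using h(2) by metis
  qed
  then show False using nv h(1) unfolding NV_def by blast
qed

lemma ppred_shift:
  assumes "ppred S s" "\<forall>P'\<in>S'. \<exists>P\<in>S. P'$1 = P$1 \<and> P'$2 = P$2 \<and> P'$3 = P$3 + t * (c1 * P$1 + c2 * P$2 + b3)"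
  shows "ppred S' (fst s + t * c1, snd s + t * c2)"
proof -
  obtain c where c: "\<forall>P\<in>S. P$3 = fst s * P$1 + snd s * P$2 + c" using assms(1) unfolding ppred_def by blast
  show ?thesis unfolding ppred_def
  proof (rule exI[of _ "c + t * b3"], intro ballI)
    fix P' assume "P' \<in> S'"
    then obtain P where P: "P \<in> S" "P'$1 = P$1" "P'$2 = P$2" "P'$3 = P$3 + t * (c1 * P$1 + c2 * P$2 + b3)"
      using assms(2) by blast
    show "P'$3 = fst (fst s + t * c1, snd s + t * c2) * P'$1 + snd (fst s + t * c1, snd s + t * c2) * P'$2 + (c + t * b3)"
      using P c by (simp add: algebra_simps)
  qed
qed



lemma cong_add: "inf_iso_congruence W \<Longrightarrow> inf_iso_congruence U \<Longrightarrow> inf_iso_congruence (\<lambda>x. W x + U x)"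
proof -
  assume "inf_iso_congruence W" "inf_iso_congruence U"
  then obtain p c1 c2 b q d1 d2 e where
    W: "\<forall>x. W x = vector [- p * x$2, p * x$1, c1 * x$1 + c2 * x$2] + b" and
    U: "\<forall>x. U x = vector [- q * x$2, q * x$1, d1 * x$1 + d2 * x$2] + e"
    unfolding inf_iso_congruence_def by blast
  have "\<forall>x. W x + U x = vector [- (p + q) * x$2, (p + q) * x$1, (c1 + d1) * x$1 + (c2 + d2) * x$2] + (b + e)"
  proof
    fix x
    have Wx: "W x = vector [- p * x$2, p * x$1, c1 * x$1 + c2 * x$2] + b" using W by blast
    have Ux: "U x = vector [- q * x$2, q * x$1, d1 * x$1 + d2 * x$2] + e" using U by blast
    show "W x + U x = vector [- (p + q) * x$2, (p + q) * x$1, (c1 + d1) * x$1 + (c2 + d2) * x$2] + (b + e)" by (simp only: Wx Ux) (simp add: vec_eq_iff forall_3 algebra_simps)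
  qed
  then show ?thesis unfolding inf_iso_congruence_def by blast
qed

lemma cong_sub: "inf_iso_congruence W \<Longrightarrow> inf_iso_congruence U \<Longrightarrow> inf_iso_congruence (\<lambda>x. W x - U x)"
proof -
  assume "inf_iso_congruence W" "inf_iso_congruence U"
  then obtain p c1 c2 b q d1 d2 e where
    W: "\<forall>x. W x = vector [- p * x$2, p * x$1, c1 * x$1 + c2 * x$2] + b" and
    U: "\<forall>x. U x = vector [- q * x$2, q * x$1, d1 * x$1 + d2 * x$2] + e"
    unfolding inf_iso_congruence_def by blast
  have "\<forall>x. W x - U x = vector [- (p - q) * x$2, (p - q) * x$1, (c1 - d1) * x$1 + (c2 - d2) * x$2] + (b - e)"
  proof
    fix x
    have Wx: "W x = vector [- p * x$2, p * x$1, c1 * x$1 + c2 * x$2] + b" using W by blast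
    have Ux: "U x = vector [- q * x$2, q * x$1, d1 * x$1 + d2 * x$2] + e" using U by blast
    show "W x - U x = vector [- (p - q) * x$2, (p - q) * x$1, (c1 - d1) * x$1 + (c2 - d2) * x$2] + (b - e)" by (simp only: Wx Ux) (simp add: vec_eq_iff forall_3 algebra_simps)
  qed
  then show ?thesis unfolding inf_iso_congruence_def by blast
qed

lemma face_dual_rel:
  assumes dc: "dual_convex m n F" and kl: "k < m" "l < n"
    and hF: "\<forall>a\<le>m. \<forall>b\<le>n. mot \<phi> b1 b2 (F a b) (V a b)"
    and hW: "inf_iso_congruence W" "V k l = W (F k l)" "V (Suc k) l = W (F (Suc k) l)"
        "V (Suc k) (Suc l) = W (F (Suc k) (Suc l))" "V k (Suc l) = W (F k (Suc l))"
    and hV': "\<And>a b. V' a b = V a b - vector [- \<phi> * F a b$2 + b1, \<phi> * F a b$1 + b2, 0]"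
  shows "face_dual_top (\<lambda>a b. F a b + t *\<^sub>R V a b) k l
       = Rm t \<phi> (face_dual_top (\<lambda>a b. F a b + t *\<^sub>R V' a b) k l)"
proof -
  define G where "G = (\<lambda>a b. F a b + t *\<^sub>R V a b)"
  define G' where "G' = (\<lambda>a b. F a b + t *\<^sub>R V' a b)"
  have cr: "rel t \<phi> b1 b2 (G a b) (G' a b) \<and> G' a b $1 = F a b $1 \<and> G' a b $2 = F a b $2"
    if "a \<le> m" "b \<le> n" for a b
  proof -
    have "mot \<phi> b1 b2 (F a b) (V a b)" using hF that by blast
    then have e: "V a b $1 = - \<phi> * F a b$2 + b1" "V a b $2 = \<phi> * F a b$1 + b2" unfolding mot_def by auto
    show ?thesis unfolding rel_def G_def G'_def hV' by (simp add: e algebra_simps)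
  qed
  obtain pw c1 c2 bb where Wf: "\<forall>x. W x = vector [- pw * x$2, pw * x$1, c1 * x$1 + c2 * x$2] + bb"
    using hW(1) unfolding inf_iso_congruence_def by blast
  have z: "G' a b $3 = F a b $3 + t * (c1 * F a b $1 + c2 * F a b $2 + bb$3)"
    if "V a b = W (F a b)" for a b
    unfolding G'_def hV' using that Wf by simp
  have km: "k \<le> m" "Suc k \<le> m" "l \<le> n" "Suc l \<le> n" using kl by auto
  note c1' = cr[OF km(1) km(3)] and c2' = cr[OF km(2) km(3)] and c3' = cr[OF km(2) km(4)] and c4' = cr[OF km(1) km(4)]
  note z1 = z[OF hW(2)] and z2 = z[OF hW(3)] and z3 = z[OF hW(4)] and z4 = z[OF hW(5)]
  define S where "S = face_vertices G k l"
  define S' where "S' = face_vertices G' k l"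
  define S0 where "S0 = face_vertices F k l"
  have r1: "\<forall>P\<in>S. \<exists>P'\<in>S'. rel t \<phi> b1 b2 P P'"
    unfolding S_def S'_def face_vertices_def using c1' c2' c3' c4' by blast
  have r2: "\<forall>P'\<in>S'. \<exists>P\<in>S. rel t \<phi> b1 b2 P P'"
    unfolding S_def S'_def face_vertices_def using c1' c2' c3' c4' by blast
  have nv0: "NV S0" unfolding S0_def using face_NV[OF dc kl] .
  have tr: "\<forall>P\<in>S0. \<exists>P'\<in>S'. P'$1 = P$1 \<and> P'$2 = P$2"
    unfolding S0_def S'_def face_vertices_def using c1' c2' c3' c4' by auto
  have nv: "NV S'" using NV_transfer[OF nv0 tr] .
  obtain s0 where s0: "ppred S0 s0" using face_plane_ex[OF dc kl] unfolding S0_def by blast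
  have sh: "\<forall>P'\<in>S'. \<exists>P\<in>S0. P'$1 = P$1 \<and> P'$2 = P$2 \<and> P'$3 = P$3 + t * (c1 * P$1 + c2 * P$2 + bb$3)"
    unfolding S0_def S'_def face_vertices_def using c1' c2' c3' c4' z1 z2 z3 z4 by auto
  have pp: "ppred S' (fst s0 + t * c1, snd s0 + t * c2)" using ppred_shift[OF s0 sh] .
  have "The (ppred S) = Rm t \<phi> (The (ppred S'))" using dual_transform[OF r1 r2 nv pp] .
  then show ?thesis unfolding fdt_eq S_def S'_def G_def G'_def .
qed



lemma gen4: fixes D :: real shows "D \<noteq> 0 \<Longrightarrow> (a + b + c + d) / 2 = ((a / D + b / D + c / D + d / D) / 2) * D"
  by (simp add: field_simps)

theorem lemma3:
  fixes m n :: nat and F :: "nat \<Rightarrow> nat \<Rightarrow> real ^ 3"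
  assumes "dual_convex m n F"
    and "inf_flexible m n F"
  shows "\<exists>V. inf_iso_isometric_deformation m n F V \<and> \<not> trivial_deformation m n F V \<and>
             (\<forall>i\<le>m. \<forall>j\<le>n. isotropic_vec (V i j))"
proof -
  note dc = assms(1)
  obtain V where def: "inf_iso_isometric_deformation m n F V" and nt: "\<not> trivial_deformation m n F V"
    using assms(2) unfolding inf_flexible_def by blast
  obtain \<phi> b1 b2 where gm: "\<forall>i\<le>m. \<forall>j\<le>n. mot \<phi> b1 b2 (F i j) (V i j)"
    using global_motion[OF dc def] by blast
  define U :: "pt \<Rightarrow> pt" where "U x = vector [- \<phi> * x$2 + b1, \<phi> * x$1 + b2, 0]" for x
  define V' where "V' i j = V i j - vector [- \<phi> * F i j$2 + b1, \<phi> * F i j$1 + b2, 0]" for i j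
  have V'U: "V' i j = V i j - U (F i j)" for i j unfolding V'_def U_def ..
  have Ucong: "inf_iso_congruence U"
  proof -
    have "\<forall>x. U x = vector [- \<phi> * x$2, \<phi> * x$1, 0 * x$1 + 0 * x$2] + vector [b1, b2, 0]"
      unfolding U_def by (simp add: vec_eq_iff forall_3)
    then show ?thesis unfolding inf_iso_congruence_def by blast
  qed
  have fc: "\<forall>k<m. \<forall>l<n. \<exists>W. inf_iso_congruence W \<and>
        V k l = W (F k l) \<and> V (Suc k) l = W (F (Suc k) l) \<and>
        V (Suc k) (Suc l) = W (F (Suc k) (Suc l)) \<and> V k (Suc l) = W (F k (Suc l))"
    using def unfolding inf_iso_isometric_deformation_def by (rule conjunct1)
  have vc: "\<forall>i j. 0 < i \<and> i < m \<and> 0 < j \<and> j < n \<longrightarrow>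
        ((\<lambda>t. curvature (\<lambda>k l. F k l + t *\<^sub>R V k l) i j) has_real_derivative 0) (at 0)"
    using def unfolding inf_iso_isometric_deformation_def by (rule conjunct2)
  have iso: "\<forall>i\<le>m. \<forall>j\<le>n. isotropic_vec (V' i j)"
    using gm unfolding isotropic_vec_def V'_def mot_def by simp
  have fc': "\<forall>k<m. \<forall>l<n. \<exists>W. inf_iso_congruence W \<and>
        V' k l = W (F k l) \<and> V' (Suc k) l = W (F (Suc k) l) \<and>
        V' (Suc k) (Suc l) = W (F (Suc k) (Suc l)) \<and> V' k (Suc l) = W (F k (Suc l))"
  proof (intro allI impI)
    fix k l assume kl: "k < m" "l < n"
    obtain W where W: "inf_iso_congruence W" "V k l = W (F k l)" "V (Suc k) l = W (F (Suc k) l)"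
        "V (Suc k) (Suc l) = W (F (Suc k) (Suc l))" "V k (Suc l) = W (F k (Suc l))"
      using fc kl by blast
    have "inf_iso_congruence (\<lambda>x. W x - U x)" using cong_sub[OF W(1) Ucong] .
    then show "\<exists>W. inf_iso_congruence W \<and>
        V' k l = W (F k l) \<and> V' (Suc k) l = W (F (Suc k) l) \<and>
        V' (Suc k) (Suc l) = W (F (Suc k) (Suc l)) \<and> V' k (Suc l) = W (F k (Suc l))"
      unfolding V'U W(2-5) by blast
  qed
  have nt': "\<not> trivial_deformation m n F V'"
  proof
    assume "trivial_deformation m n F V'"
    then obtain W0 where W0: "inf_iso_congruence W0" "\<forall>i\<le>m. \<forall>j\<le>n. V' i j = W0 (F i j)"
      unfolding trivial_deformation_def by blast
    have "\<forall>i\<le>m. \<forall>j\<le>n. V i j = W0 (F i j) + U (F i j)"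
    proof (intro allI impI)
      fix i j assume "i \<le> m" "j \<le> n"
      then have "V' i j = W0 (F i j)" using W0(2) by blast
      then show "V i j = W0 (F i j) + U (F i j)" unfolding V'U by (metis diff_add_cancel)
    qed
    then have "trivial_deformation m n F V"
      unfolding trivial_deformation_def using cong_add[OF W0(1) Ucong] by blast
    then show False using nt by blast
  qed
  have vc': "((\<lambda>t. curvature (\<lambda>k l. F k l + t *\<^sub>R V' k l) i j) has_real_derivative 0) (at 0)"
    if ij: "0 < i" "i < m" "0 < j" "j < n" for i j
  proof -
    have fr: "face_dual_top (\<lambda>a b. F a b + t *\<^sub>R V a b) k l
       = Rm t \<phi> (face_dual_top (\<lambda>a b. F a b + t *\<^sub>R V' a b) k l)" if kl: "k < m" "l < n" for k l t
    proof -
      obtain W where W: "inf_iso_congruence W" "V k l = W (F k l)" "V (Suc k) l = W (F (Suc k) l)"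
          "V (Suc k) (Suc l) = W (F (Suc k) (Suc l))" "V k (Suc l) = W (F k (Suc l))"
        using fc kl by blast
      show ?thesis using face_dual_rel[OF dc kl gm W V'_def] .
    qed
    have key: "curvature (\<lambda>k l. F k l + t *\<^sub>R V' k l) i j
       = curvature (\<lambda>k l. F k l + t *\<^sub>R V k l) i j * (1 + (t * \<phi>)^2)" for t
    proof -
      have D: "1 + (t * \<phi>)^2 \<noteq> 0" using Dpos[of t \<phi>] by linarith
      have f1: "i - 1 < m" "j - 1 < n" using ij by auto
      show ?thesis unfolding curvature_def Let_def fr[OF f1] fr[OF f1(1) ij(4)] fr[OF ij(2) f1(2)]
          fr[OF ij(2) ij(4)] det2_Rm by (rule gen4[OF D])
    qed
    have d1: "((\<lambda>t. curvature (\<lambda>k l. F k l + t *\<^sub>R V k l) i j) has_real_derivative 0) (at 0)"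
      using vc ij by blast
    have d2: "((\<lambda>t::real. 1 + (t * \<phi>)^2) has_real_derivative 0) (at 0)"
      by (auto intro!: derivative_eq_intros)
    have "((\<lambda>t. curvature (\<lambda>k l. F k l + t *\<^sub>R V k l) i j * (1 + (t * \<phi>)^2)) has_real_derivative
        0 * (1 + (0 * \<phi>)^2) + 0 * curvature (\<lambda>k l. F k l + 0 *\<^sub>R V k l) i j) (at 0)"
      using DERIV_mult[OF d1 d2] by simp
    then show ?thesis unfolding key by simp
  qed
  have "inf_iso_isometric_deformation m n F V'"
    unfolding inf_iso_isometric_deformation_def using fc' vc' by blast
  then show ?thesis using nt' iso by blast
qed

end
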